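(* Let $\gamma\ge1$, $p(\rho)=\rho^\gamma$, and consider the generalized Riemann problem for $\rho_t+(\rho u)_x=0$, $(\rho u)_t+(\rho u^2+p(\rho))_x=0$ with initial data $\varrho_0=\rho_1\mathcal L^1\lfloor\{x<0\}+\rho_0\delta_{\{x=0\}}+\rho_2\mathcal L^1\lfloor\{x>0\}$, $u(x,0)=u_1\mathsf I_{\{x<0\}}+u_0\mathsf I_{\{x=0\}}+u_2\mathsf I_{\{x>0\}}$, $\rho_1,\rho_2>0$, $\rho_0\ge0$. Consider the single delta shock solutions with front $x=x(t)$ given by the explicit formulas in the context, and suppose they satisfy the over-compressing entropy condition. Then: ($\alpha$) for $\rho_0=0$, each such solution is self-similar; ($\beta$) for $\rho_0>0$: (a) the delta shock front $x=x(t)$ is convex if in addition either (i) $[\rho]=0$ and $u_2\le u_0<\frac{u_1+u_2}{2}$, or (ii) $[\rho]\ne0$ and $u_2\le u_0<\min\{u_1,\frac{[\rho u]+\sqrt a}{[\rho]}\}$; (b) the front is concave if in addition either (i) $[\rho]=0$ and $u_1\ge u_0>\frac{u_1+u_2}{2}$, or (ii) $[\rho]\ne0$ and $u_1\ge u_0>\max\{u_2,\frac{[\rho u]+\sqrt a}{[\rho]}\}$.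
   Context: Notation: $[\rho]=\rho_2-\rho_1$, $[u]=u_2-u_1$, $[u^2]=u_2^2-u_1^2$, $[\rho u]=\rho_2u_2-\rho_1u_1$, $[p]=\rho_2^\gamma-\rho_1^\gamma$; $a=\rho_1\rho_2[u]^2-[\rho][p]$, $b=[\rho]u_0-[\rho u]$, $\Delta(t)=at^2+2\rho_0bt+\rho_0^2$. $\mathcal L^1$ Lebesgue measure, $m\lfloor A$ restriction, $\delta_{\{x=y\}}$ Dirac mass, $\mathsf I_A$ indicator. A single delta shock solution is a Radon measure solution (mass and momentum equations satisfied in the weak measure sense, with $d m/d\varrho=u$, $dn/d\varrho=u^2$ for the momentum and momentum-flux measures $m,n$, and pressure $\rho^\gamma$ on the absolutely continuous part) of the form $\varrho(t)=\rho_1\mathcal L^1\lfloor\{x<x(t)\}+\rho_2\mathcal L^1\lfloor\{x>x(t)\}+w_\rho(t)\delta_{\{x=x(t)\}}$, $u(t)=u_1\mathsf I_{\{x<x(t)\}}+u_2\mathsf I_{\{x>x(t)\}}+x'(t)\mathsf I_{\{x=x(t)\}}$, with $x(0)=0$ and $w_\rho\ge0$. The solutions considered are: for $\rho_0=0$, $[\rho]=0$, $[u]\le0$: $x(t)=\frac{(u_1+u_2)t}{2}$, $w_\rho=-\rho_1[u]t$; for $\rho_0=0$, $[\rho]\ne0$, $a\ge0$: $x(t)=\frac{([\rho u]+\sqrt a)t}{[\rho]}$, $w_\rho=\sqrt a\,t$; for $\rho_0>0$, $[\rho]=0$: $x(t)=\frac{\rho_1[u^2]t^2-2\rho_0u_0t}{2(\rho_1[u]t-\rho_0)}$,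 $w_\rho=-\rho_1[u]t+\rho_0$; for $\rho_0>0$, $[\rho]\ne0$: $x(t)=\frac{[\rho u]t-\rho_0+\sqrt{\Delta(t)}}{[\rho]}$, $w_\rho=\sqrt{\Delta(t)}$ (on the time interval where $\Delta\ge0$). Over-compressing entropy condition: $u_1\ge x'(t)\ge u_2$. *)

theory Defs
  imports "HOL-Analysis.Analysis"
begin

definition a_coef :: "real \<Rightarrow> real \<Rightarrow> real \<Rightarrow> real \<Rightarrow> real \<Rightarrow> real" where
  "a_coef \<gamma> \<rho>1 \<rho>2 u1 u2 =
     \<rho>1 * \<rho>2 * (u2 - u1)^2 - (\<rho>2 - \<rho>1) * (\<rho>2 powr \<gamma> - \<rho>1 powr \<gamma>)"

definition b_coef :: "real \<Rightarrow> real \<Rightarrow> real \<Rightarrow> real \<Rightarrow> real \<Rightarrow> real" where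
  "b_coef \<rho>1 \<rho>2 u0 u1 u2 = (\<rho>2 - \<rho>1) * u0 - (\<rho>2 * u2 - \<rho>1 * u1)"

definition Delta :: "real \<Rightarrow> real \<Rightarrow> real \<Rightarrow> real \<Rightarrow> real \<Rightarrow> real \<Rightarrow> real \<Rightarrow> real \<Rightarrow> real" where
  "Delta \<gamma> \<rho>0 \<rho>1 \<rho>2 u0 u1 u2 t =
     a_coef \<gamma> \<rho>1 \<rho>2 u1 u2 * t^2 + 2 * \<rho>0 * b_coef \<rho>1 \<rho>2 u0 u1 u2 * t + \<rho>0^2"

definition front :: "real \<Rightarrow> real \<Rightarrow> real \<Rightarrow> real \<Rightarrow> real \<Rightarrow> real \<Rightarrow> real \<Rightarrow> real \<Rightarrow> real" where
  "front \<gamma> \<rho>0 \<rho>1 \<rho>2 u0 u1 u2 t =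
    (if \<rho>0 = 0 then
       (if \<rho>2 = \<rho>1 then (u1 + u2) * t / 2
        else ((\<rho>2 * u2 - \<rho>1 * u1) + sqrt (a_coef \<gamma> \<rho>1 \<rho>2 u1 u2)) * t / (\<rho>2 - \<rho>1))
     else
       (if \<rho>2 = \<rho>1 then (\<rho>1 * (u2^2 - u1^2) * t^2 - 2 * \<rho>0 * u0 * t)
                            / (2 * (\<rho>1 * (u2 - u1) * t - \<rho>0))
        else ((\<rho>2 * u2 - \<rho>1 * u1) * t - \<rho>0 + sqrt (Delta \<gamma> \<rho>0 \<rho>1 \<rho>2 u0 u1 u2 t))
             / (\<rho>2 - \<rho>1)))"

definition weight :: "real \<Rightarrow> real \<Rightarrow> real \<Rightarrow> real \<Rightarrow> real \<Rightarrow> real \<Rightarrow> real \<Rightarrow> real \<Rightarrow> real" where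
  "weight \<gamma> \<rho>0 \<rho>1 \<rho>2 u0 u1 u2 t =
    (if \<rho>0 = 0 then
       (if \<rho>2 = \<rho>1 then - \<rho>1 * (u2 - u1) * t else sqrt (a_coef \<gamma> \<rho>1 \<rho>2 u1 u2) * t)
     else
       (if \<rho>2 = \<rho>1 then - \<rho>1 * (u2 - u1) * t + \<rho>0
        else sqrt (Delta \<gamma> \<rho>0 \<rho>1 \<rho>2 u0 u1 u2 t)))"

definition admissible :: "real \<Rightarrow> real \<Rightarrow> real \<Rightarrow> real \<Rightarrow> real \<Rightarrow> real \<Rightarrow> bool" where
  "admissible \<gamma> \<rho>0 \<rho>1 \<rho>2 u1 u2 \<longleftrightarrow>
     (\<rho>0 = 0 \<and> \<rho>2 = \<rho>1 \<longrightarrow> u2 - u1 \<le> 0) \<and>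
     (\<rho>0 = 0 \<and> \<rho>2 \<noteq> \<rho>1 \<longrightarrow> a_coef \<gamma> \<rho>1 \<rho>2 u1 u2 \<ge> 0)"

text \<open>Time interval [0, T) or [0, T] (starting at t = 0) on which the explicit solution
  is defined: all t \<ge> 0 for rho0 = 0; the times before the weight (equivalently
  the denominator) vanishes for rho0 > 0, [rho] = 0; the times on which Delta \<ge> 0
  (from t = 0 on) for rho0 > 0, [rho] \<noteq> 0.\<close>
definition time_dom :: "real \<Rightarrow> real \<Rightarrow> real \<Rightarrow> real \<Rightarrow> real \<Rightarrow> real \<Rightarrow> real \<Rightarrow> real set" where
  "time_dom \<gamma> \<rho>0 \<rho>1 \<rho>2 u0 u1 u2 =
    (if \<rho>0 = 0 then {0..}
     else if \<rho>2 = \<rho>1 then {t. 0 \<le> t \<and> (\<forall>s\<in>{0..t}. \<rho>0 - \<rho>1 * (u2 - u1) * s > 0)}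
     else {t. 0 \<le> t \<and> (\<forall>s\<in>{0..t}. Delta \<gamma> \<rho>0 \<rho>1 \<rho>2 u0 u1 u2 s \<ge> 0)})"

definition over_compressing :: "(real \<Rightarrow> real) \<Rightarrow> real \<Rightarrow> real \<Rightarrow> real set \<Rightarrow> bool" where
  "over_compressing x u1 u2 D \<longleftrightarrow>
     (\<forall>t\<in>D. t > 0 \<longrightarrow> (\<forall>d. (x has_real_derivative d) (at t) \<longrightarrow> u2 \<le> d \<and> d \<le> u1))"

text \<open>Self-similarity of a single delta shock solution (front x, weight w): invariance of
  the solution under the scaling (x,t) \<mapsto> (\<lambda>x, \<lambda>t); the constant states are
  scale invariant, so this amounts to x(\<lambda>t) = \<lambda>x(t) and w(\<lambda>t) = \<lambda>w(t).\<close>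
definition self_similar :: "(real \<Rightarrow> real) \<Rightarrow> (real \<Rightarrow> real) \<Rightarrow> bool" where
  "self_similar x w \<longleftrightarrow>
     (\<forall>c>0. \<forall>t\<ge>0. x (c * t) = c * x t \<and> w (c * t) = c * w t)"

end

theory Submission imports Defs begin

lemma convex_on_cong':
  fixes f g :: "real \<Rightarrow> real"
  assumes "convex_on S f" "\<And>x. x \<in> S \<Longrightarrow> g x = f x"
  shows "convex_on S g"
proof (rule convex_onI)
  show cS: "convex S" using assms(1) by (rule convex_on_imp_convex)
  fix t x y :: real assume h: "0 < t" "t < 1" "x \<in> S" "y \<in> S"
  have m: "(1 - t) *\<^sub>R x + t *\<^sub>R y \<in> S" using cS h by (intro convexD) auto
  show "g ((1 - t) *\<^sub>R x + t *\<^sub>R y) \<le> (1 - t) * g x + t * g y"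
    using convex_onD[OF assms(1), of t x y] h m assms(2) by simp
qed

lemma convex_aff:
  fixes g :: "real \<Rightarrow> real"
  assumes "convex_on S g" "c \<ge> 0"
  shows "convex_on S (\<lambda>t. A*t + B + c * g t)"
proof -
  have cS: "convex S" using assms(1) by (rule convex_on_imp_convex)
  have "convex_on S (\<lambda>t. A*t + B)"
    by (rule convex_onI[OF _ cS]) (simp add: algebra_simps)
  moreover have "convex_on S (\<lambda>t. c * g t)" by (rule convex_on_cmul[OF assms(2) assms(1)])
  ultimately show ?thesis by (rule convex_on_add)
qed

lemma quad_nonneg:
  fixes a b r t :: real
  assumes "b^2 \<le> a"
  shows "a*t^2 + 2*r*b*t + r^2 \<ge> 0"
proof -
  have a0: "a \<ge> 0" using assms(1) zero_le_power2[of b] by linarith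
  have "a * (a*t^2 + 2*r*b*t + r^2) = (a*t + r*b)^2 + r^2*(a - b^2)"
    by (simp add: power2_eq_square algebra_simps)
  also have "\<dots> \<ge> 0" using assms(1) by (intro add_nonneg_nonneg mult_nonneg_nonneg) auto
  finally have h: "a * (a*t^2 + 2*r*b*t + r^2) \<ge> 0" .
  show ?thesis
  proof (cases "a = 0")
    case True
    then have "b^2 \<le> 0" using assms(1) by simp
    then have "b = 0" by simp
    then show ?thesis using True by simp
  next
    case False
    then show ?thesis using h a0 by (simp add: zero_le_mult_iff)
  qed
qed

lemma sqrt_convex_pt:
  fixes a b r x y th :: real
  assumes "b^2 \<le> a" "0 \<le> th" "th \<le> 1"
  shows "sqrt (a*((1-th)*x+th*y)^2 + 2*r*b*((1-th)*x+th*y) + r^2)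
     \<le> (1-th) * sqrt (a*x^2 + 2*r*b*x + r^2) + th * sqrt (a*y^2 + 2*r*b*y + r^2)"
proof -
  define Qx where "Qx = a*x^2 + 2*r*b*x + r^2"
  define Qy where "Qy = a*y^2 + 2*r*b*y + r^2"
  define B where "B = a*x*y + r*b*(x+y) + r^2"
  have Qx0: "Qx \<ge> 0" unfolding Qx_def by (rule quad_nonneg[OF assms(1)])
  have Qy0: "Qy \<ge> 0" unfolding Qy_def by (rule quad_nonneg[OF assms(1)])
  have id: "Qx * Qy - B^2 = r^2*(a-b^2)*(x-y)^2"
    unfolding Qx_def Qy_def B_def by (simp add: power2_eq_square algebra_simps)
  have "B^2 \<le> Qx*Qy" using id assms(1) by (smt (verit) mult_nonneg_nonneg zero_le_power2)
  hence "B \<le> sqrt (Qx*Qy)" by (simp add: real_le_rsqrt)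
  hence Bl: "B \<le> sqrt Qx * sqrt Qy" by (simp add: real_sqrt_mult)
  have ez: "a*((1-th)*x+th*y)^2 + 2*r*b*((1-th)*x+th*y) + r^2 = (1-th)^2*Qx + th^2*Qy + 2*(1-th)*th*B"
    unfolding Qx_def Qy_def B_def by (simp add: power2_eq_square algebra_simps)
  also have "\<dots> \<le> (1-th)^2*Qx + th^2*Qy + 2*(1-th)*th*(sqrt Qx * sqrt Qy)"
    using Bl assms by (simp add: mult_left_mono)
  also have "\<dots> = ((1-th) * sqrt Qx + th * sqrt Qy)^2"
    using Qx0 Qy0 by (simp add: power2_eq_square algebra_simps)
  finally have "sqrt (a*((1-th)*x+th*y)^2 + 2*r*b*((1-th)*x+th*y) + r^2) \<le> sqrt (((1-th) * sqrt Qx + th * sqrt Qy)^2)"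
    by (rule real_sqrt_le_mono)
  also have "\<dots> = (1-th) * sqrt Qx + th * sqrt Qy" using assms Qx0 Qy0 by simp
  finally show ?thesis unfolding Qx_def Qy_def .
qed

lemma sqrt_concave_pt:
  fixes a b r x y th :: real
  assumes "a \<le> b^2" "a \<ge> 0" "b \<ge> 0" "r \<ge> 0" "x \<ge> 0" "y \<ge> 0" "0 \<le> th" "th \<le> 1"
  shows "sqrt (a*((1-th)*x+th*y)^2 + 2*r*b*((1-th)*x+th*y) + r^2)
     \<ge> (1-th) * sqrt (a*x^2 + 2*r*b*x + r^2) + th * sqrt (a*y^2 + 2*r*b*y + r^2)"
proof -
  define Qx where "Qx = a*x^2 + 2*r*b*x + r^2"
  define Qy where "Qy = a*y^2 + 2*r*b*y + r^2"
  define B where "B = a*x*y + r*b*(x+y) + r^2"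
  have Qx0: "Qx \<ge> 0" unfolding Qx_def using assms by simp
  have Qy0: "Qy \<ge> 0" unfolding Qy_def using assms by simp
  have B0: "B \<ge> 0" unfolding B_def using assms by simp
  have id: "B^2 - Qx * Qy = r^2*(b^2-a)*(x-y)^2"
    unfolding Qx_def Qy_def B_def by (simp add: power2_eq_square algebra_simps)
  have "Qx*Qy \<le> B^2" using id assms(1) by (smt (verit) mult_nonneg_nonneg zero_le_power2)
  hence "sqrt (Qx*Qy) \<le> sqrt (B^2)" by (rule real_sqrt_le_mono)
  hence "sqrt (Qx*Qy) \<le> B" using B0 by simp
  hence Bl: "sqrt Qx * sqrt Qy \<le> B" by (simp add: real_sqrt_mult)
  have "((1-th) * sqrt Qx + th * sqrt Qy)^2 = (1-th)^2*Qx + th^2*Qy + 2*(1-th)*th*(sqrt Qx * sqrt Qy)"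
    using Qx0 Qy0 by (simp add: power2_eq_square algebra_simps)
  also have "\<dots> \<le> (1-th)^2*Qx + th^2*Qy + 2*(1-th)*th*B"
    using Bl assms by (simp add: mult_left_mono)
  also have "\<dots> = a*((1-th)*x+th*y)^2 + 2*r*b*((1-th)*x+th*y) + r^2"
    unfolding Qx_def Qy_def B_def by (simp add: power2_eq_square algebra_simps)
  finally have "sqrt (((1-th) * sqrt Qx + th * sqrt Qy)^2) \<le> sqrt (a*((1-th)*x+th*y)^2 + 2*r*b*((1-th)*x+th*y) + r^2)"
    by (rule real_sqrt_le_mono)
  moreover have "sqrt (((1-th) * sqrt Qx + th * sqrt Qy)^2) = (1-th) * sqrt Qx + th * sqrt Qy" using assms Qx0 Qy0 by simp
  ultimately show ?thesis unfolding Qx_def Qy_def by simp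
qed

lemma sqrt_convex:
  fixes a b r :: real
  assumes "b^2 \<le> a" "convex S"
  shows "convex_on S (\<lambda>t. sqrt (a*t^2 + 2*r*b*t + r^2))"
  using assms(2) by (intro convex_onI) (use sqrt_convex_pt[OF assms(1)] in auto)

lemma sqrt_concave:
  fixes a b r :: real
  assumes "a \<le> b^2" "a \<ge> 0" "b \<ge> 0" "r \<ge> 0"
  shows "convex_on {0..} (\<lambda>t. - sqrt (a*t^2 + 2*r*b*t + r^2))"
proof (intro convex_onI)
  fix th x y :: real assume "0 < th" "th < 1" "x \<in> {0..}" "y \<in> {0..}"
  then show "- sqrt (a*((1 - th) *\<^sub>R x + th *\<^sub>R y)^2 + 2*r*b*((1 - th) *\<^sub>R x + th *\<^sub>R y) + r^2)
    \<le> (1 - th) * (- sqrt (a*x^2 + 2*r*b*x + r^2)) + th * (- sqrt (a*y^2 + 2*r*b*y + r^2))"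
    using sqrt_concave_pt[OF assms, of x y th] by simp
qed (rule convex_real_interval)

lemma inv_convex:
  fixes k r :: real
  assumes "k < 0" "r > 0"
  shows "convex_on {0..} (\<lambda>t. inverse (r - k*t))"
proof (intro convex_onI)
  fix th x y :: real assume h: "0 < th" "th < 1" "x \<in> {0..}" "y \<in> {0..}"
  have ci: "convex_on {0<..} (inverse :: real \<Rightarrow> real)" by (rule convex_on_inverse) auto
  have px: "r - k*x > 0" "r - k*y > 0" using h assms by (auto simp: mult_nonpos_nonneg) (smt (verit) mult_nonpos_nonneg)+
  have "inverse ((1-th) *\<^sub>R (r-k*x) + th *\<^sub>R (r - k*y)) \<le> (1-th) * inverse (r-k*x) + th * inverse (r-k*y)"
    using convex_onD[OF ci, of th "r-k*x" "r-k*y"] h px by auto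
  moreover have "(1-th) *\<^sub>R (r-k*x) + th *\<^sub>R (r - k*y) = r - k * ((1 - th) *\<^sub>R x + th *\<^sub>R y)"
    by (simp add: algebra_simps)
  ultimately show "inverse (r - k * ((1 - th) *\<^sub>R x + th *\<^sub>R y)) \<le> (1 - th) * inverse (r - k * x) + th * inverse (r - k * y)"
    by simp
qed (rule convex_real_interval)


lemma aux_eq:
  fixes k m r u0 t :: real
  assumes "k \<noteq> 0" "k*t - r \<noteq> 0"
  shows "(2*k*m*t^2 - 2*r*u0*t)/(2*(k*t - r)) = m*t + r*(m-u0)/k + r^2*(m-u0)/(-k)*inverse(r - k*t)"
proof -
  have d2: "r - k*t \<noteq> 0" using assms(2) by simp
  show ?thesis using assms d2
    by (simp add: field_simps power2_eq_square)
qed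

lemma aux_div:
  fixes r P q S t :: real
  assumes "r \<noteq> 0"
  shows "(P*t - q + S)/r = P/r*t + (-q/r) + (1/r)*S"
  using assms by (simp add: field_simps)

lemma aux_neg:
  fixes m t C c i x y z :: real
  shows "- (m*t + x*(y-z)/w + c*i) = (-m)*t + (-(x*(y-z)/w)) + (-c)*i"
  by simp

lemma aux_neg2:
  fixes x y z w :: real
  shows "x*(z-y)/w = -(x*(y-z)/w)"
  by (metis minus_diff_eq minus_divide_left mult_minus_right)

theorem proposition3:
  fixes \<gamma> \<rho>0 \<rho>1 \<rho>2 u0 u1 u2 :: real
  assumes "\<gamma> \<ge> 1" and "\<rho>1 > 0" and "\<rho>2 > 0" and "\<rho>0 \<ge> 0"
    and "admissible \<gamma> \<rho>0 \<rho>1 \<rho>2 u1 u2"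
    and "over_compressing (front \<gamma> \<rho>0 \<rho>1 \<rho>2 u0 u1 u2) u1 u2 (time_dom \<gamma> \<rho>0 \<rho>1 \<rho>2 u0 u1 u2)"
  shows "(\<rho>0 = 0 \<longrightarrow> self_similar (front \<gamma> \<rho>0 \<rho>1 \<rho>2 u0 u1 u2) (weight \<gamma> \<rho>0 \<rho>1 \<rho>2 u0 u1 u2))
       \<and> (\<rho>0 > 0 \<longrightarrow>
           (((\<rho>2 = \<rho>1 \<and> u2 \<le> u0 \<and> u0 < (u1 + u2) / 2)
             \<or> (\<rho>2 \<noteq> \<rho>1 \<and> a_coef \<gamma> \<rho>1 \<rho>2 u1 u2 \<ge> 0 \<and> u2 \<le> u0 \<and>
                u0 < min u1 (((\<rho>2 * u2 - \<rho>1 * u1) + sqrt (a_coef \<gamma> \<rho>1 \<rho>2 u1 u2)) / (\<rho>2 - \<rho>1))))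
            \<longrightarrow> convex_on (time_dom \<gamma> \<rho>0 \<rho>1 \<rho>2 u0 u1 u2) (front \<gamma> \<rho>0 \<rho>1 \<rho>2 u0 u1 u2))
         \<and> (((\<rho>2 = \<rho>1 \<and> u1 \<ge> u0 \<and> u0 > (u1 + u2) / 2)
             \<or> (\<rho>2 \<noteq> \<rho>1 \<and> a_coef \<gamma> \<rho>1 \<rho>2 u1 u2 \<ge> 0 \<and> u1 \<ge> u0 \<and>
                u0 > max u2 (((\<rho>2 * u2 - \<rho>1 * u1) + sqrt (a_coef \<gamma> \<rho>1 \<rho>2 u1 u2)) / (\<rho>2 - \<rho>1))))
            \<longrightarrow> concave_on (time_dom \<gamma> \<rho>0 \<rho>1 \<rho>2 u0 u1 u2) (front \<gamma> \<rho>0 \<rho>1 \<rho>2 u0 u1 u2)))"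
proof -
  define r where "r = \<rho>2 - \<rho>1"
  define P where "P = \<rho>2 * u2 - \<rho>1 * u1"
  define A where "A = a_coef \<gamma> \<rho>1 \<rho>2 u1 u2"
  define b where "b = b_coef \<rho>1 \<rho>2 u0 u1 u2"
  define x where "x = front \<gamma> \<rho>0 \<rho>1 \<rho>2 u0 u1 u2"
  define D where "D = time_dom \<gamma> \<rho>0 \<rho>1 \<rho>2 u0 u1 u2"
  have bdef: "b = r*u0 - P" unfolding b_def b_coef_def r_def P_def by simp
  have Dl: "\<And>t. Delta \<gamma> \<rho>0 \<rho>1 \<rho>2 u0 u1 u2 t = A*t^2 + 2*\<rho>0*b*t + \<rho>0^2"
    by (simp add: Delta_def A_def b_def)
  have alpha: "self_similar x (weight \<gamma> \<rho>0 \<rho>1 \<rho>2 u0 u1 u2)" if z: "\<rho>0 = 0"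
    unfolding self_similar_def x_def front_def weight_def using z by (simp add: field_simps)
  have beta: "(((\<rho>2 = \<rho>1 \<and> u2 \<le> u0 \<and> u0 < (u1 + u2) / 2)
             \<or> (\<rho>2 \<noteq> \<rho>1 \<and> A \<ge> 0 \<and> u2 \<le> u0 \<and>
                u0 < min u1 ((P + sqrt A) / r)))
            \<longrightarrow> convex_on D x)
         \<and> (((\<rho>2 = \<rho>1 \<and> u1 \<ge> u0 \<and> u0 > (u1 + u2) / 2)
             \<or> (\<rho>2 \<noteq> \<rho>1 \<and> A \<ge> 0 \<and> u1 \<ge> u0 \<and>
                u0 > max u2 ((P + sqrt A) / r)))
            \<longrightarrow> concave_on D x)" if r0: "\<rho>0 > 0"
  proof -
    have eqcase: "D = {0..} \<and> (\<forall>t\<ge>0. x t = (u1+u2)/2*t + \<rho>0*((u1+u2)/2-u0)/(\<rho>1*(u2-u1))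
           + \<rho>0^2*((u1+u2)/2-u0)/(-(\<rho>1*(u2-u1))) * inverse (\<rho>0 - \<rho>1*(u2-u1)*t))"
      if e: "\<rho>2 = \<rho>1" and k: "\<rho>1*(u2-u1) < 0"
    proof
      show "D = {0..}" unfolding D_def time_dom_def using r0 e k
        by (auto simp: mult_nonpos_nonneg) (smt (verit) mult_nonpos_nonneg)
      show "\<forall>t\<ge>0. x t = (u1+u2)/2*t + \<rho>0*((u1+u2)/2-u0)/(\<rho>1*(u2-u1))
           + \<rho>0^2*((u1+u2)/2-u0)/(-(\<rho>1*(u2-u1))) * inverse (\<rho>0 - \<rho>1*(u2-u1)*t)"
      proof (intro allI impI)
        fix t :: real assume t: "t \<ge> 0"
        have "\<rho>1*(u2-u1)*t \<le> 0" using k t by (simp add: mult_nonpos_nonneg)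
        hence d: "\<rho>0 - \<rho>1*(u2-u1)*t > 0" "\<rho>1*(u2-u1)*t - \<rho>0 \<noteq> 0" using r0 by auto
        have kk: "\<rho>1*(u2-u1) \<noteq> 0" by (rule less_imp_neq[OF k])
        show "x t = (u1+u2)/2*t + \<rho>0*((u1+u2)/2-u0)/(\<rho>1*(u2-u1))
           + \<rho>0^2*((u1+u2)/2-u0)/(-(\<rho>1*(u2-u1))) * inverse (\<rho>0 - \<rho>1*(u2-u1)*t)"
        proof -
          have q: "\<rho>1 * (u2^2 - u1^2) = 2*(\<rho>1*(u2-u1))*((u1+u2)/2)"
            by (simp add: power2_eq_square algebra_simps)
          have "x t = (2*(\<rho>1*(u2-u1))*((u1+u2)/2)*t^2 - 2*\<rho>0*u0*t)/(2*((\<rho>1*(u2-u1))*t - \<rho>0))"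
            unfolding x_def front_def using r0 e by (simp only: q) simp
          also have "\<dots> = (u1+u2)/2*t + \<rho>0*((u1+u2)/2-u0)/(\<rho>1*(u2-u1))
           + \<rho>0^2*((u1+u2)/2-u0)/(-(\<rho>1*(u2-u1))) * inverse (\<rho>0 - \<rho>1*(u2-u1)*t)"
            by (rule aux_eq[OF kk d(2)])
          finally show ?thesis .
        qed
      qed
    qed
    have neqcase: "\<And>t. x t = P/r*t + (-\<rho>0/r) + (1/r) * sqrt (A*t^2 + 2*\<rho>0*b*t + \<rho>0^2)"
      if "\<rho>2 \<noteq> \<rho>1"
    proof -
      fix t
      have "x t = (P*t - \<rho>0 + sqrt (A*t^2 + 2*\<rho>0*b*t + \<rho>0^2))/r"
        unfolding x_def front_def using that r0 by (simp add: Dl r_def P_def)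
      also have "\<dots> = P/r*t + (-\<rho>0/r) + (1/r) * sqrt (A*t^2 + 2*\<rho>0*b*t + \<rho>0^2)"
        by (rule aux_div) (use that r_def in simp)
      finally show "x t = P/r*t + (-\<rho>0/r) + (1/r) * sqrt (A*t^2 + 2*\<rho>0*b*t + \<rho>0^2)" .
    qed
    have Dall: "D = {0..}" if "\<rho>2 \<noteq> \<rho>1" "\<And>t. t \<ge> 0 \<Longrightarrow> A*t^2 + 2*\<rho>0*b*t + \<rho>0^2 \<ge> 0"
      unfolding D_def time_dom_def using that r0 Dl by auto
    have sa: "sqrt A \<ge> 0" "sqrt A ^ 2 = A" if "A \<ge> 0" using that by auto
    show ?thesis
    proof (intro conjI impI)
      assume H: "(\<rho>2 = \<rho>1 \<and> u2 \<le> u0 \<and> u0 < (u1 + u2) / 2)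
             \<or> (\<rho>2 \<noteq> \<rho>1 \<and> A \<ge> 0 \<and> u2 \<le> u0 \<and> u0 < min u1 ((P + sqrt A) / r))"
      show "convex_on D x"
      proof (cases "\<rho>2 = \<rho>1")
        case True
        with H have h: "u2 \<le> u0" "u0 < (u1 + u2) / 2" by auto
        have k: "\<rho>1*(u2-u1) < 0" using h assms(2) by (simp add: mult_pos_neg)
        note ec = eqcase[OF True k]
        have c0: "\<rho>0^2*((u1+u2)/2-u0)/(-(\<rho>1*(u2-u1))) \<ge> 0" using k h by (intro divide_nonneg_pos mult_nonneg_nonneg) auto
        have "convex_on {0..} (\<lambda>t. (u1+u2)/2*t + \<rho>0*((u1+u2)/2-u0)/(\<rho>1*(u2-u1))
           + \<rho>0^2*((u1+u2)/2-u0)/(-(\<rho>1*(u2-u1))) * inverse (\<rho>0 - \<rho>1*(u2-u1)*t))"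
          by (rule convex_aff[OF inv_convex[OF k r0] c0])
        then show ?thesis using ec by (auto intro: convex_on_cong')
      next
        case False
        with H have A0: "A \<ge> 0" and h: "u2 \<le> u0" "u0 < u1" "u0 < (P + sqrt A) / r" by auto
        have rne: "r \<noteq> 0" using False r_def by simp
        show ?thesis
        proof (cases "r > 0")
          case True
          have "P + sqrt A > u0 * r" using h(3) True by (simp add: pos_less_divide_eq)
          hence b1: "b \<le> sqrt A" using bdef by (simp add: algebra_simps)
          have e1: "r*(u0-u2) \<ge> 0" using True h by simp
          have e2: "\<rho>1*(u1-u2) > 0" using h assms(2) by simp
          have "b = r*(u0-u2) + \<rho>1*(u1-u2)" unfolding bdef r_def P_def by (simp add: algebra_simps)
          hence b0: "b \<ge> 0" using e1 e2 by linarith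
          have bA: "b^2 \<le> A" using power_mono[OF b1 b0, of 2] sa[OF A0] by simp
          have DD: "D = {0..}" by (rule Dall[OF False]) (rule quad_nonneg[OF bA])
          have cv: "convex_on {0..} (\<lambda>t. P/r*t + (-\<rho>0/r) + (1/r) * sqrt (A*t^2 + 2*\<rho>0*b*t + \<rho>0^2))"
            using True by (intro convex_aff sqrt_convex[OF bA]) (auto intro: convex_real_interval)
          show ?thesis unfolding DD by (rule convex_on_cong'[OF cv]) (simp add: neqcase[OF False] algebra_simps)
        next
          case False2: False
          hence rn: "r < 0" using rne by simp
          have "P + sqrt A < u0 * r" using h(3) rn by (simp add: neg_less_divide_eq)
          hence b1: "b \<ge> sqrt A" using bdef by (simp add: algebra_simps)
          hence b0: "b \<ge> 0" using sa(1)[OF A0] by linarith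
          have bA: "A \<le> b^2" using power_mono[OF b1 sa(1)[OF A0], of 2] sa[OF A0] by simp
          have DD: "D = {0..}" using A0 b0 r0 by (intro Dall[OF False]) simp
          have cv: "convex_on {0..} (\<lambda>t. P/r*t + (-\<rho>0/r) + (-1/r) * (- sqrt (A*t^2 + 2*\<rho>0*b*t + \<rho>0^2)))"
            using rn A0 b0 r0 by (intro convex_aff sqrt_concave[OF bA]) auto
          show ?thesis unfolding DD by (rule convex_on_cong'[OF cv]) (simp add: neqcase[OF False] algebra_simps)
        qed
      qed
    next
      assume H: "(\<rho>2 = \<rho>1 \<and> u1 \<ge> u0 \<and> u0 > (u1 + u2) / 2)
             \<or> (\<rho>2 \<noteq> \<rho>1 \<and> A \<ge> 0 \<and> u1 \<ge> u0 \<and> u0 > max u2 ((P + sqrt A) / r))"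
      show "concave_on D x" unfolding concave_on_def
      proof (cases "\<rho>2 = \<rho>1")
        case True
        with H have h: "u1 \<ge> u0" "u0 > (u1 + u2) / 2" by auto
        have k: "\<rho>1*(u2-u1) < 0" using h assms(2) by (simp add: mult_pos_neg)
        note ec = eqcase[OF True k]
        have c0: "-(\<rho>0^2*((u1+u2)/2-u0)/(-(\<rho>1*(u2-u1)))) \<ge> 0"
          unfolding aux_neg2[symmetric] using k h by (intro divide_nonneg_pos mult_nonneg_nonneg) auto
        have cv: "convex_on {0..} (\<lambda>t. (-((u1+u2)/2))*t + (-(\<rho>0*((u1+u2)/2-u0)/(\<rho>1*(u2-u1))))
           + (-(\<rho>0^2*((u1+u2)/2-u0)/(-(\<rho>1*(u2-u1))))) * inverse (\<rho>0 - \<rho>1*(u2-u1)*t))"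
          by (rule convex_aff[OF inv_convex[OF k r0] c0])
        show "convex_on D (\<lambda>t. - x t)" unfolding ec[THEN conjunct1]
        proof (rule convex_on_cong'[OF cv])
          fix t :: real assume "t \<in> {0..}"
          then have "x t = (u1+u2)/2*t + \<rho>0*((u1+u2)/2-u0)/(\<rho>1*(u2-u1))
           + \<rho>0^2*((u1+u2)/2-u0)/(-(\<rho>1*(u2-u1))) * inverse (\<rho>0 - \<rho>1*(u2-u1)*t)"
            using ec by simp
          then show "- x t = (-((u1+u2)/2))*t + (-(\<rho>0*((u1+u2)/2-u0)/(\<rho>1*(u2-u1))))
           + (-(\<rho>0^2*((u1+u2)/2-u0)/(-(\<rho>1*(u2-u1))))) * inverse (\<rho>0 - \<rho>1*(u2-u1)*t)"
            by (simp only: aux_neg)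
        qed
      next
        case False
        with H have A0: "A \<ge> 0" and h: "u0 \<le> u1" "u2 < u0" "(P + sqrt A) / r < u0" by auto
        have rne: "r \<noteq> 0" using False r_def by simp
        show "convex_on D (\<lambda>t. - x t)"
        proof (cases "r > 0")
          case True
          have "P + sqrt A < u0 * r" using h(3) True by (simp add: pos_divide_less_eq)
          hence b1: "b \<ge> sqrt A" using bdef by (simp add: algebra_simps)
          hence b0: "b \<ge> 0" using sa(1)[OF A0] by linarith
          have bA: "A \<le> b^2" using power_mono[OF b1 sa(1)[OF A0], of 2] sa[OF A0] by simp
          have DD: "D = {0..}" using A0 b0 r0 by (intro Dall[OF False]) simp
          have cv: "convex_on {0..} (\<lambda>t. (-P/r)*t + \<rho>0/r + (1/r) * (- sqrt (A*t^2 + 2*\<rho>0*b*t + \<rho>0^2)))"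
            using True A0 b0 r0 by (intro convex_aff sqrt_concave[OF bA]) auto
          show ?thesis unfolding DD by (rule convex_on_cong'[OF cv]) (simp add: neqcase[OF False] algebra_simps)
        next
          case False2: False
          hence rn: "r < 0" using rne by simp
          have "u0 * r < P + sqrt A" using h(3) rn by (simp add: neg_divide_less_eq)
          hence b1: "b \<le> sqrt A" using bdef by (simp add: algebra_simps)
          have e1: "r*(u0-u1) \<ge> 0" using rn h by (simp add: mult_nonpos_nonpos)
          have e2: "\<rho>2*(u1-u2) > 0" using h assms(3) by simp
          have "b = r*(u0-u1) + \<rho>2*(u1-u2)" unfolding bdef r_def P_def by (simp add: algebra_simps)
          hence b0: "b \<ge> 0" using e1 e2 by linarith
          have bA: "b^2 \<le> A" using power_mono[OF b1 b0, of 2] sa[OF A0] by simp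
          have DD: "D = {0..}" by (rule Dall[OF False]) (rule quad_nonneg[OF bA])
          have cv: "convex_on {0..} (\<lambda>t. (-P/r)*t + \<rho>0/r + (-1/r) * sqrt (A*t^2 + 2*\<rho>0*b*t + \<rho>0^2))"
            using rn by (intro convex_aff sqrt_convex[OF bA]) (auto intro: convex_real_interval)
          show ?thesis unfolding DD by (rule convex_on_cong'[OF cv]) (simp add: neqcase[OF False] algebra_simps)
        qed
      qed
    qed
  qed
  show ?thesis
    unfolding x_def[symmetric] D_def[symmetric] A_def[symmetric] P_def[symmetric] r_def[symmetric]
    using alpha beta by blast
qed

end
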